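(* The set of points of exact period $5$ under $G$ lies on the curve $P_5(u,v)=0$, where \begin{align*} P_5(u,v)={}&-3u^5v^6+3u^4v^2-u^7v^2+uv^3-u^6v-u^5v+2u^3v-4u^3v^2-2uv^4+2u^4v\\ &+6u^2v^4+2u^7v^3-u^7v^4+u^4v^7+v^5+v^7+u^6v^2+6u^2v^7+2v^6+3u^6v^5\\ &+u^3+4uv^7+4u^3v^7-12u^4v^6+14u^5v^5-8u^6v^4-16u^3v^6-5u^5v^3-12u^5v^4\\ &+5u^6v^3+18u^4v^5+19u^3v^4-6u^2v^6+3uv^6+6u^4v^4-16u^4v^3+7u^5v^2\\ &-4uv^5-12u^2v^5-5u^3v^3-2u^2v^2+4u^2v^3, \end{align*} and the Zariski closure in $\mathbb{C}^2$ of this set is this curve (this is the equation of period five orbits on the $(u,v)$-plane).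
   Context: Let \[ G(u,v)=\left(\frac{-u+v+uv}{u},\ \frac{u^{2}-u+v-u^{2}v-uv+uv^{2}+v^{2}}{u}\right), \] defined for $(u,v)\in\mathbb{C}^2$ with $u\neq 0$. A point $(u,v)$ has exact period $n$ under $G$ if the iterates $G^k(u,v)$, $0\le k\le n-1$, all have nonzero first coordinate, $G^n(u,v)=(u,v)$, and $G^k(u,v)\neq(u,v)$ for $0<k<n$. *)

theory Defs
  imports Complex_Main
begin

definition G :: "complex \<times> complex \<Rightarrow> complex \<times> complex" where
  "G p = (let u = fst p; v = snd p in
     ((-u + v + u*v) / u,
      (u^2 - u + v - u^2*v - u*v + u*v^2 + v^2) / u))"

definition exact_period :: "nat \<Rightarrow> complex \<times> complex \<Rightarrow> bool" where
  "exact_period n p \<longleftrightarrow>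
     (\<forall>k<n. fst ((G ^^ k) p) \<noteq> 0) \<and> (G ^^ n) p = p \<and>
     (\<forall>k. 0 < k \<and> k < n \<longrightarrow> (G ^^ k) p \<noteq> p)"

definition poly2 :: "(complex \<Rightarrow> complex \<Rightarrow> complex) \<Rightarrow> bool" where
  "poly2 f \<longleftrightarrow> (\<exists>(n::nat) (c::nat \<Rightarrow> nat \<Rightarrow> complex).
      \<forall>u v. f u v = (\<Sum>i\<le>n. \<Sum>j\<le>n. c i j * u^i * v^j))"

definition zariski_closed :: "(complex \<times> complex) set \<Rightarrow> bool" where
  "zariski_closed A \<longleftrightarrow> (\<exists>F. (\<forall>f\<in>F. poly2 f) \<and> A = {(u,v). \<forall>f\<in>F. f u v = 0})"

definition zariski_closure :: "(complex \<times> complex) set \<Rightarrow> (complex \<times> complex) set" where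
  "zariski_closure S = \<Inter>{A. zariski_closed A \<and> S \<subseteq> A}"

definition P5 :: "complex \<Rightarrow> complex \<Rightarrow> complex" where
  "P5 u v = -3*u^5*v^6 + 3*u^4*v^2 - u^7*v^2 + u*v^3 - u^6*v - u^5*v + 2*u^3*v - 4*u^3*v^2 - 2*u*v^4 + 2*u^4*v
    + 6*u^2*v^4 + 2*u^7*v^3 - u^7*v^4 + u^4*v^7 + v^5 + v^7 + u^6*v^2 + 6*u^2*v^7 + 2*v^6 + 3*u^6*v^5
    + u^3 + 4*u*v^7 + 4*u^3*v^7 - 12*u^4*v^6 + 14*u^5*v^5 - 8*u^6*v^4 - 16*u^3*v^6 - 5*u^5*v^3 - 12*u^5*v^4
    + 5*u^6*v^3 + 18*u^4*v^5 + 19*u^3*v^4 - 6*u^2*v^6 + 3*u*v^6 + 6*u^4*v^4 - 16*u^4*v^3 + 7*u^5*v^2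
    - 4*u*v^5 - 12*u^2*v^5 - 5*u^3*v^3 - 2*u^2*v^2 + 4*u^2*v^3"

end

theory Submission
  imports Defs "HOL-Computational_Algebra.Fundamental_Theorem_Algebra" "HOL-Analysis.Analysis"
begin

definition Cc :: "complex \<Rightarrow> complex \<Rightarrow> complex" where
  "Cc a b = (0 - a^7 * b^4 + 2 * a^7 * b^3 - a^7 * b^2 + 3 * a^6 * b^5 - 9 * a^6 * b^3 + 7 * a^6 * b^2 - a^6 * b - 3 * a^5 * b^6 - 10 * a^5 * b^5 + 16 * a^5 * b^4 + 7 * a^5 * b^3 - 13 * a^5 * b^2 + 3 * a^5 * b + a^4 * b^7 + 12 * a^4 * b^6 + 4 * a^4 * b^5 - 34 * a^4 * b^4 + 14 * a^4 * b^3 + 5 * a^4 * b^2 - a^4 * b - 4 * a^3 * b^7 - 16 * a^3 * b^6 + 18 * a^3 * b^5 + 19 * a^3 * b^4 - 21 * a^3 * b^3 + 4 * a^3 * b^2 - a^3 * b + a^3 + 6 * a^2 * b^7 + 6 * a^2 * b^6 - 22 * a^2 * b^5 + 6 * a^2 * b^4 + 6 * a^2 * b^3 - 2 * a^2 * b^2 - 4 * a * b^7 + 3 * a * b^6 + 6 * a * b^5 - 6 * a * b^4 + a * b^3 + b^7 - 2 * b^6 + b^5)"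
definition "W2 a b = b * (a + (a + a * b - b) - a^2)"
definition "W3 a b = W2 a b * (a + W2 a b - (a + a * b - b) + a^2 - a * b)"
definition "W4 a b = a * (a+a * b-b) - a * W2 a b + W3 a b"
lemma R3: "a^2 * W4 a b - W3 a b * (a^2 + W4 a b - a^3 + b * a^2 - a * W2 a b) = (a-b) * Cc a b"
  unfolding W2_def W3_def W4_def Cc_def by algebra
lemma R4: "a^5 - W4 a b * (a^2 + a^3 - b * a^2 + a * W2 a b - W3 a b) = -(a-b) * Cc a b"
  unfolding W2_def W3_def W4_def Cc_def by algebra
lemma C1: "Cc 1 y = 1" unfolding Cc_def by simp

definition EqS :: "complex \<Rightarrow> complex \<Rightarrow> complex \<Rightarrow> complex \<Rightarrow> complex \<Rightarrow> bool" where
 "EqS a b c d e \<longleftrightarrow> b = a * (1+b-c+d-e) \<and> c = b * (1+c-d+e-a) \<and> d = c * (1+d-e+a-b) \<and> e = d * (1+e-a+b-c) \<and> a = e * (1+a-b+c-d)"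

lemma EqS_rot: "EqS a b c d e \<Longrightarrow> EqS b c d e a" unfolding EqS_def by auto

lemma L1: assumes "a \<noteq> 0" "EqS a b c d e" shows "(a-b) * Cc a b = 0"
proof -
  have H0: "a * (c-d+e) = a + a * b - b" and H1: "c = b * (1+(c-d+e)-a)" and H2: "d = c * (1 + c - (c-d+e) + a - b)"
    and H3: "e = d * (1+e-a+b-c)" using assms(2) unfolding EqS_def by (auto simp: algebra_simps)
  have ac: "a * c = W2 a b" unfolding W2_def using H0 H1 by algebra
  have ad: "a^2 * d = W3 a b" unfolding W3_def using H2 ac H0 by algebra
  have ae: "a^2 * e = W4 a b" unfolding W4_def using H0 ac ad by algebra
  have "a^4 * e = a^2 * d * (a^2 + a^2 * e - a^3 + b * a^2 - a * (a * c))" using H3 by algebra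
  hence "a^2 * W4 a b - W3 a b * (a^2 + W4 a b - a^3 + b * a^2 - a * W2 a b) = 0"
    unfolding ac ad ae[symmetric] by algebra
  thus ?thesis using R3 by simp
qed

lemma Lnz: assumes "a \<noteq> 0" "EqS a b c d e" shows "b \<noteq> 0 \<and> c \<noteq> 0 \<and> d \<noteq> 0 \<and> e \<noteq> 0"
  using assms unfolding EqS_def by (metis mult_zero_left)

lemma Leq: assumes "a \<noteq> 0" "EqS a b c d e" "a = b" shows "c = a \<and> d = a \<and> e = a"
proof -
  have H0: "a * (c-d+e) = a + a * b - b" and H1: "c = b * (1+(c-d+e)-a)" and H2: "d = c * (1 + c - (c-d+e) + a - b)"
    using assms(2) unfolding EqS_def by (auto simp: algebra_simps)
  have "a * (c-d+e) = a * a" using H0 assms(3) by simp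
  hence T: "c-d+e = a" using assms(1) by simp
  have c: "c = a" using H1 T assms(3) by simp
  have d: "d = a" using H2 T c assms(3) by simp
  show ?thesis using T c d by simp
qed

lemma L3: assumes "a \<noteq> 0" "Cc a b = 0"
  shows "EqS a b (W2 a b/a) (W3 a b/a^2) (W4 a b/a^2)"
proof -
  define c d e where "c = W2 a b/a" "d = W3 a b/a^2" "e = W4 a b/a^2"
  have ac: "a * c = W2 a b" and ad: "a^2 * d = W3 a b" and ae: "a^2 * e = W4 a b"
    using assms(1) unfolding c_d_e_def by (auto simp: field_simps)
  have r3: "a^2 * W4 a b - W3 a b * (a^2 + W4 a b - a^3 + b * a^2 - a * W2 a b) = 0" using R3 assms by simp
  have r4: "a^5 - W4 a b * (a^2 + a^3 - b * a^2 + a * W2 a b - W3 a b) = 0" using R4 assms by simp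
  have e0: "a * (a * (1+b-c+d-e)) = a * b" using ac ad ae unfolding W2_def W3_def W4_def by algebra
  have e1: "a * (b * (1+c-d+e-a)) = a * c" using ac ad ae unfolding W2_def W3_def W4_def by algebra
  have e2: "a^2 * (c * (1+d-e+a-b)) = a^2 * d" using ac ad ae unfolding W2_def W3_def W4_def by algebra
  have "a^4 * (d * (1+e-a+b-c)) = (a^2 * d) * (a^2 + a^2 * e - a^3 + b * a^2 - a * (a * c))" by algebra
  also have "... = W3 a b * (a^2 + W4 a b - a^3 + b * a^2 - a * W2 a b)" unfolding ac ad ae ..
  also have "... = a^2 * W4 a b" using r3 by simp
  also have "... = a^4 * e" unfolding ae[symmetric] by algebra
  finally have e3: "a^4 * (d * (1+e-a+b-c)) = a^4 * e" .
  have "a^4 * (e * (1+a-b+c-d)) = (a^2 * e) * (a^2 + a^3 - b * a^2 + a * (a * c) - a^2 * d)" by algebra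
  also have "... = W4 a b * (a^2 + a^3 - b * a^2 + a * W2 a b - W3 a b)" unfolding ac ad ae ..
  also have "... = a^5" using r4 by simp
  also have "... = a^4 * a" by algebra
  finally have e4: "a^4 * (e * (1+a-b+c-d)) = a^4 * a" .
  show ?thesis unfolding c_d_e_def[symmetric] EqS_def using e0 e1 e2 e3 e4 assms(1) by simp
qed

lemma RecE: "EqS a b c d e \<Longrightarrow> c * a = b * (a * b - b - a^2 + 2 * a)"
  unfolding EqS_def by algebra
lemma G_eq: "G (u,v) = ((-u+v+u * v)/u, (u^2 - u + v - u^2 * v - u * v + u * v^2 + v^2)/u)"
  by (simp add: G_def)
lemma K1: "u \<noteq> 0 \<Longrightarrow> u * (fst (G (u,v)) + 1) = v * (u+1)"
  by (simp add: G_eq field_simps)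
lemma K2: assumes "u\<noteq>0" "u+1\<noteq>0" "fst (G(u,v)) \<noteq> 0"
  shows "(fst (G (G (u,v))) + 1) * (u+1) = (fst (G(u,v)) + 1) * ((u+1) * (fst (G(u,v))+1) - (fst(G(u,v))+1) - (u+1)^2 + 2 * (u+1))"
proof -
  obtain u1 v1 where g: "G(u,v) = (u1,v1)" by (cases "G(u,v)") auto
  obtain u2 v2 where g2: "G(u1,v1) = (u2,v2)" by (cases "G(u1,v1)") auto
  have u1: "u1 \<noteq> 0" using assms g by simp
  have A: "u * (u1+1) = v * (u+1)" using K1[OF assms(1), of v] g by simp
  have B: "u * v1 = u^2 - u + v - u^2 * v - u * v + u * v^2 + v^2" using g assms(1) by (simp add: G_eq field_simps)
  have C: "u1 * (u2+1) = v1 * (u1+1)" using K1[OF u1, of v1] g2 by simp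
  have "(u2 + 1) * (u+1) = (u1 + 1) * ((u+1) * (u1+1) - (u1+1) - (u+1)^2 + 2 * (u+1))"
    using A B C u1 assms(1,2) by algebra
  thus ?thesis using g g2 by simp
qed
lemma Rs: assumes "(a::complex)\<noteq>0" "b\<noteq>0" "c * a = b * (a * b - b - a^2 + 2 * a)"
  shows "b/a + c/b = b - a + 2"
proof -
  have "c = b * (a * b - b - a^2 + 2 * a)/a" using assms by (simp add: field_simps)
  thus ?thesis using assms by (simp add: field_simps power2_eq_square)
qed
lemma RE: assumes "(a::complex)\<noteq>0" "b\<noteq>0" "c\<noteq>0" "d\<noteq>0" "e\<noteq>0"
  "c * a = b * (a * b - b - a^2 + 2 * a)" "d * b = c * (b * c - c - b^2 + 2 * b)" "e * c = d * (c * d - d - c^2 + 2 * c)"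
  "a * d = e * (d * e - e - d^2 + 2 * d)" "b * e = a * (e * a - a - e^2 + 2 * e)"
  shows "b = a * (1+b-c+d-e)"
proof -
  have s0: "b/a + c/b = b - a + 2" using Rs assms by blast
  have s1: "c/b + d/c = c - b + 2" using Rs assms by blast
  have s2: "d/c + e/d = d - c + 2" using Rs assms by blast
  have s3: "e/d + a/e = e - d + 2" using Rs assms by blast
  have s4: "a/e + b/a = a - e + 2" using Rs assms by blast
  have "2 * (b/a) = (b/a + c/b) - (c/b + d/c) + (d/c + e/d) - (e/d + a/e) + (a/e + b/a)" by simp
  also have "... = 2 * (1+b-c+d-e)" unfolding s0 s1 s2 s3 s4 by simp
  finally have "b/a = 1+b-c+d-e" by (metis mult_cancel_left zero_neq_numeral)
  thus ?thesis using assms(1) by (simp add: field_simps)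
qed

definition Pt :: "complex \<Rightarrow> complex \<Rightarrow> complex" where
 "Pt u s = u^3 * (u+1)^7 + s * ((0 - u^6 - u^5 + 2 * u^4 + 2 * u^3) * (u+1)^6 + s * ((0 - u^7 + u^6 + 7 * u^5 + 3 * u^4 - 4 * u^3 - 2 * u^2) * (u+1)^5
  + s * ((2 * u^7 + 5 * u^6 - 5 * u^5 - 16 * u^4 - 5 * u^3 + 4 * u^2 + u) * (u+1)^4 + s * ((0 - u^7 - 8 * u^6 - 12 * u^5 + 6 * u^4 + 19 * u^3 + 6 * u^2 - 2 * u) * (u+1)^3
  + s * ((3 * u^6 + 14 * u^5 + 18 * u^4 - 12 * u^2 - 4 * u + 1) * (u+1)^2 + s * ((0 - 3 * u^5 - 12 * u^4 - 16 * u^3 - 6 * u^2 + 3 * u + 2) * (u+1)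
  + s * (u^4 + 4 * u^3 + 6 * u^2 + 4 * u + 1)))))))"
lemma l1: "(u+1)^7 * P5 u v = Pt u ((u+1) * v)"
  unfolding P5_def Pt_def by algebra
lemma l2: "Pt u (u * b) = (u+1)^4 * u^3 * Cc (u+1) b"
  unfolding Cc_def Pt_def by algebra
lemma P5_Cc: assumes "u * b = (u+1) * v" shows "(u+1)^7 * P5 u v = (u+1)^4 * u^3 * Cc (u+1) b"
  using l1[of u v] l2[of u b] assms by simp

lemma K1p: "fst p \<noteq> 0 \<Longrightarrow> fst p * (fst (G p) + 1) = snd p * (fst p+1)"
  using K1[of "fst p" "snd p"] by simp
lemma K2p: "fst p \<noteq> 0 \<Longrightarrow> fst p+1 \<noteq> 0 \<Longrightarrow> fst (G p) \<noteq> 0 \<Longrightarrow>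
  (fst (G (G p)) + 1) * (fst p+1) = (fst (G p) + 1) * ((fst p+1) * (fst (G p)+1) - (fst (G p)+1) - (fst p+1)^2 + 2 * (fst p+1))"
  using K2[of "fst p" "snd p"] by simp

lemma line1: "fst p = -1 \<Longrightarrow> fst (G p) = -1"
  by (cases p) (simp add: G_eq)
lemma line2: "fst p = -1 \<Longrightarrow> G (G p) = p"
  by (cases p) (simp add: G_eq field_simps)
lemma lineN: "fst p = -1 \<Longrightarrow> fst ((G^^n) p) = -1"
  by (induction n) (auto simp: line1)

lemma iter_mult: "(G^^n) p = p \<Longrightarrow> (G^^(n * m)) p = p"
proof (induction m)
  case 0 then show ?case by simp
next
  case (Suc m)
  have "(G^^(n * Suc m)) p = (G^^n) ((G^^(n * m)) p)" by (simp add: funpow_add)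
  then show ?case using Suc by simp
qed
lemma no_return: assumes "(G^^5) p = p" "G p \<noteq> p" "0 < k" "k < (5::nat)" shows "(G^^k) p \<noteq> p"
proof
  assume h: "(G^^k) p = p"
  have k: "k = 1 \<or> k = 2 \<or> k = 3 \<or> k = 4" using assms by auto
  have a5: "(G^^(5 * m)) p = p" for m using iter_mult[OF assms(1)] by simp
  have "\<exists>m j. k * j = 5 * m + 1" using k
  proof (elim disjE)
    assume "k=1" thus ?thesis by (intro exI[of _ 0] exI[of _ 1]) simp
  next
    assume "k=2" thus ?thesis by (intro exI[of _ 1] exI[of _ 3]) simp
  next
    assume "k=3" thus ?thesis by (intro exI[of _ 1] exI[of _ 2]) simp
  next
    assume "k=4" thus ?thesis by (intro exI[of _ 3] exI[of _ 4]) simp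
  qed
  then obtain m j where mj: "k * j = 5 * m+1" by blast
  have "(G^^(k * j)) p = p" using iter_mult[OF h] by simp
  also have "(G^^(k * j)) p = G ((G^^(5 * m)) p)" unfolding mj by simp
  finally show False using a5 assms(2) by simp
qed

lemma step: assumes "fst q + 1 = x" "fst (G q) + 1 = y" "x \<noteq> 0" "x \<noteq> 1" "y \<noteq> 1"
  "z * x = y * (x * y - y - x^2 + 2 * x)" shows "fst (G (G q)) + 1 = z"
proof -
  have q0: "fst q \<noteq> 0" using assms(1,4) by auto
  have q1: "fst q + 1 \<noteq> 0" using assms(1,3) by auto
  have q2: "fst (G q) \<noteq> 0" using assms(2,5) by auto
  have "(fst (G (G q)) + 1) * x = z * x" using K2p[OF q0 q1 q2] assms by simp
  thus ?thesis using assms(3) by simp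
qed

lemma neg1: "(u::complex) \<noteq> -1 \<Longrightarrow> u + 1 \<noteq> 0"
  by (metis add.commute add_minus_cancel add.right_neutral)

lemma GP: assumes "P5 u v = 0" "u \<noteq> 0" "u \<noteq> -1" "v \<noteq> u" shows "exact_period 5 (u,v)"
proof -
  define a b where "a = u+1" and "b = (u+1) * v/u"
  have a0: "a \<noteq> 0" using neg1[OF assms(3)] a_def by simp
  have ub: "u * b = (u+1) * v" using assms(2) by (simp add: b_def)
  have "(u+1)^4 * u^3 * Cc (u+1) b = 0" using P5_Cc[OF ub] assms(1) by simp
  hence C0: "Cc a b = 0" using a0 assms(2) by (simp add: a_def)
  have ab: "a \<noteq> b"
  proof
    assume "a = b"
    hence "u * (u+1) = (u+1) * v" using ub a_def by simp
    thus False using assms(4) a0 a_def by simp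
  qed
  define c d e where "c = W2 a b/a" and "d = W3 a b/a^2" and "e = W4 a b/a^2"
  have E: "EqS a b c d e" using L3[OF a0 C0] by (simp add: c_def d_def e_def)
  have nz: "b \<noteq> 0 \<and> c \<noteq> 0 \<and> d \<noteq> 0 \<and> e \<noteq> 0" using Lnz[OF a0 E] .
  have E1: "EqS b c d e a" using EqS_rot[OF E] .
  have E2: "EqS c d e a b" using EqS_rot[OF E1] .
  have E3: "EqS d e a b c" using EqS_rot[OF E2] .
  have E4: "EqS e a b c d" using EqS_rot[OF E3] .
  have bc: "b \<noteq> c" using Leq[OF _ E1] nz ab by metis
  have cd: "c \<noteq> d" using Leq[OF _ E2] nz ab by metis
  have de: "d \<noteq> e" using Leq[OF _ E3] nz ab by metis
  have ea: "e \<noteq> a" using Leq[OF _ E4] nz ab by metis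
  have b1: "b \<noteq> 1" using L1[OF _ E1] nz bc C1 by force
  have c1: "c \<noteq> 1" using L1[OF _ E2] nz cd C1 by force
  have d1: "d \<noteq> 1" using L1[OF _ E3] nz de C1 by force
  have e1: "e \<noteq> 1" using L1[OF _ E4] nz ea C1 by force
  have a1: "a \<noteq> 1" using assms(2) a_def by simp
  define orb where "orb k = (G^^k) (u,v)" for k
  have oS: "orb (Suc k) = G (orb k)" for k by (simp add: orb_def)
  have o0: "fst (orb 0) + 1 = a" by (simp add: orb_def a_def)
  have "u * (fst (orb 1) + 1) = u * b" using K1[OF assms(2), of v] ub by (simp add: orb_def)
  hence o1: "fst (orb 1) + 1 = b" using assms(2) by simp
  have o2: "fst (orb 2) + 1 = c" using step[of "orb 0" a b c] o0 o1 a0 a1 b1 RecE[OF E] nz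
    by (simp add: oS numeral_2_eq_2)
  have o3: "fst (orb 3) + 1 = d" using step[of "orb 1" b c d] o1 o2 nz b1 c1 RecE[OF E1]
    by (simp add: oS numeral_3_eq_3 numeral_2_eq_2)
  have o4: "fst (orb 4) + 1 = e" using step[of "orb 2" c d e] o2 o3 nz c1 d1 RecE[OF E2]
    by (simp add: oS eval_nat_numeral)
  have o5: "fst (orb 5) + 1 = a" using step[of "orb 3" d e a] o3 o4 nz d1 e1 RecE[OF E3]
    by (simp add: oS eval_nat_numeral)
  have o6: "fst (orb 6) + 1 = b" using step[of "orb 4" e a b] o4 o5 nz e1 a1 RecE[OF E4]
    by (simp add: oS eval_nat_numeral)
  have f5: "fst (orb 5) = u" using o5 a_def by simp
  have "fst (orb 5) * (fst (G (orb 5)) + 1) = snd (orb 5) * (fst (orb 5)+1)" using K1p[of "orb 5"] f5 assms(2) by simp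
  hence "u * b = snd (orb 5) * (u+1)" using f5 o6 oS[of 5] by (simp add: eval_nat_numeral)
  hence "snd (orb 5) = v" using ub a0 a_def by (simp add: mult.commute)
  hence per: "(G^^5) (u,v) = (u,v)" using f5 unfolding orb_def by (metis prod.collapse)
  have nf: "G (u,v) \<noteq> (u,v)"
  proof
    assume "G (u,v) = (u,v)"
    hence "fst (orb 1) = u" by (simp add: orb_def)
    thus False using o1 ab a_def by simp
  qed
  have nz5: "fst (orb k) \<noteq> 0" if "k < 5" for k
  proof -
    have "k = 0 \<or> k = 1 \<or> k = 2 \<or> k = 3 \<or> k = 4" using that by auto
    thus ?thesis using o0 o1 o2 o3 o4 a1 b1 c1 d1 e1 by auto
  qed
  show ?thesis unfolding exact_period_def
    using nz5 per no_return[OF per nf] by (simp add: orb_def)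
qed

lemma P1: assumes "exact_period 5 p" shows "P5 (fst p) (snd p) = 0"
proof -
  obtain u v where p: "p = (u,v)" by (cases p)
  define orb where "orb k = (G^^k) p" for k
  have oS: "orb (Suc k) = G (orb k)" for k by (simp add: orb_def)
  have nz: "fst (orb k) \<noteq> 0" if "k < 5" for k using assms that unfolding exact_period_def orb_def by blast
  have o5: "orb 5 = p" using assms unfolding exact_period_def orb_def by blast
  have nr: "orb k \<noteq> p" if "0 < k" "k < 5" for k using assms that unfolding exact_period_def orb_def by blast
  have o0: "orb 0 = p" by (simp add: orb_def)
  have o6: "orb 6 = orb 1" using o5 oS[of 5] oS[of 0] o0 by (simp add: eval_nat_numeral)
  have u0: "u \<noteq> 0" using nz[of 0] o0 p by simp
  have um: "u \<noteq> -1"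
  proof
    assume "u = -1"
    hence "G (G p) = p" using line2[of p] p by simp
    hence "orb 2 = p" by (simp add: orb_def numeral_2_eq_2)
    thus False using nr[of 2] by simp
  qed
  have nm: "fst (orb k) + 1 \<noteq> 0" if "k < 5" for k
  proof
    assume h: "fst (orb k) + 1 = 0"
    hence "fst (orb k) = -1" by (simp add: eq_neg_iff_add_eq_0)
    hence "fst ((G^^(5-k)) (orb k)) = -1" by (rule lineN)
    moreover have "(G^^(5-k)) (orb k) = orb 5"
    proof -
      have "(G^^(5-k)) (orb k) = (G^^(5-k+k)) p" unfolding orb_def by (simp add: funpow_add)
      also have "5-k+k = 5" using that by simp
      finally show ?thesis by (simp add: orb_def)
    qed
    ultimately show False using o5 p um by simp
  qed
  define a b c d e where "a = fst (orb 0) + 1" and "b = fst (orb 1) + 1" and "c = fst (orb 2) + 1"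
    and "d = fst (orb 3) + 1" and "e = fst (orb 4) + 1"
  have nz1: "fst (orb 5) \<noteq> 0" using o5 u0 p by simp
  have nm5: "fst (orb 5) + 1 = a" using o5 o0 a_def by simp
  have nm6: "fst (orb 6) + 1 = b" using o6 b_def by simp
  have R': "(fst (orb (k+2)) + 1) * (fst (orb k)+1) = (fst (orb (k+1)) + 1) * ((fst (orb k)+1) * (fst (orb (k+1))+1)
      - (fst (orb (k+1))+1) - (fst (orb k)+1)^2 + 2 * (fst (orb k)+1))" if "k < 5" for k
  proof -
    have "fst (orb (k+1)) \<noteq> 0" using nz nz1 that by (cases "k = 4") auto
    thus ?thesis using K2p[of "orb k"] nz[OF that] nm[OF that] by (simp add: oS)
  qed
  have R: "(fst (orb k2) + 1) * (fst (orb k)+1) = (fst (orb k1) + 1) * ((fst (orb k)+1) * (fst (orb k1)+1)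
      - (fst (orb k1)+1) - (fst (orb k)+1)^2 + 2 * (fst (orb k)+1))" if "k < 5" "k1 = k+1" "k2 = k+2" for k k1 k2
    using R'[OF that(1)] that by simp
  have R0: "c * a = b * (a * b - b - a^2 + 2 * a)" unfolding a_def b_def c_def by (rule R) simp_all
  have R1: "d * b = c * (b * c - c - b^2 + 2 * b)" unfolding b_def c_def d_def by (rule R) simp_all
  have R2: "e * c = d * (c * d - d - c^2 + 2 * c)" unfolding e_def c_def d_def by (rule R) simp_all
  have R3: "a * d = e * (d * e - e - d^2 + 2 * d)" unfolding e_def d_def nm5[symmetric] by (rule R) simp_all
  have R4: "b * e = a * (e * a - a - e^2 + 2 * e)" unfolding e_def nm5[symmetric] nm6[symmetric] by (rule R) simp_all
  have na: "a \<noteq> 0" "b \<noteq> 0" "c \<noteq> 0" "d \<noteq> 0" "e \<noteq> 0" using nm unfolding a_def b_def c_def d_def e_def by auto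
  have E: "EqS a b c d e" unfolding EqS_def
    using RE[OF na R0 R1 R2 R3 R4] RE[OF na(2,3,4,5,1) R1 R2 R3 R4 R0] RE[OF na(3,4,5,1,2) R2 R3 R4 R0 R1]
      RE[OF na(4,5,1,2,3) R3 R4 R0 R1 R2] RE[OF na(5,1,2,3,4) R4 R0 R1 R2 R3] by (intro conjI)
  have ub: "u * b = (u+1) * v" using K1p[of p] u0 p o0 by (simp add: b_def oS mult.commute)
  have ab: "a \<noteq> b"
  proof
    assume ab: "a = b"
    have ca: "c = a" using Leq[OF na(1) E ab] by simp
    have a': "a = u + 1" using o0 p a_def by simp
    have "u * a = v * a" using ub ab a' by (simp add: mult.commute)
    hence vu: "v = u" using na(1) by simp
    have u1: "fst (orb 1) = u" using b_def ab a' by simp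
    have "fst (orb 1) * (fst (orb 2) + 1) = snd (orb 1) * (fst (orb 1) + 1)"
      using K1p[of "orb 1"] nz[of 1] by (simp add: oS numeral_2_eq_2)
    hence "u * a = snd (orb 1) * a" using u1 c_def ca a' by simp
    hence "snd (orb 1) = u" using na(1) by simp
    hence "orb 1 = p" using u1 vu p by (metis prod.collapse)
    thus False using nr[of 1] by simp
  qed
  have "Cc a b = 0" using L1[OF na(1) E] ab by simp
  hence "(u+1)^7 * P5 u v = 0" using P5_Cc[OF ub] o0 p a_def by simp
  thus ?thesis using p neg1[OF um] by simp
qed
lemma root_bound:
  fixes p :: "complex poly"
  assumes "degree p = n" "0 < n"
  shows "\<exists>z. poly p z = 0 \<and> cmod (lead_coeff p) * cmod (x - z)^n \<le> cmod (poly p x)"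
  using assms
proof (induction n arbitrary: p)
  case 0 then show ?case by simp
next
  case (Suc m)
  have "\<not> (\<exists>a l. a \<noteq> 0 \<and> l = 0 \<and> p = pCons a l)" using Suc.prems by auto
  then obtain z1 where z1: "poly p z1 = 0" using fundamental_theorem_of_algebra_alt by blast
  then obtain q where pq: "p = [:-z1,1:] * q" using poly_eq_0_iff_dvd by (metis dvdE)
  have q0: "q \<noteq> 0" using pq Suc.prems by auto
  have "degree ([:-z1,1:] * q) = degree [:-z1,1:] + degree q" by (rule degree_mult_eq) (use q0 in auto)
  hence dq: "degree q = m" using pq Suc.prems(1) by simp
  have lq: "lead_coeff p = lead_coeff q" unfolding pq lead_coeff_mult by simp
  have px: "poly p y = (y - z1) * poly q y" for y unfolding pq poly_mult by (simp add: algebra_simps)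
  show ?case
  proof (cases "m = 0")
    case True
    then obtain c where "q = [:c:]" using dq using degree0_coeffs by blast
    hence "cmod (lead_coeff p) * cmod (x - z1)^Suc m = cmod (poly p x)"
      using lq px True by (simp add: norm_mult)
    thus ?thesis using z1 by (intro exI[of _ z1]) simp
  next
    case False
    then obtain z2 where z2: "poly q z2 = 0" and b2: "cmod (lead_coeff q) * cmod (x - z2)^m \<le> cmod (poly q x)"
      using Suc.IH[OF dq] by auto
    have pz2: "poly p z2 = 0" using px z2 by simp
    have npx: "cmod (poly p x) = cmod (x - z1) * cmod (poly q x)" using px by (simp add: norm_mult)
    show ?thesis
    proof (cases "cmod (x - z1) \<le> cmod (x - z2)")
      case True
      have "cmod (lead_coeff p) * cmod (x - z1)^Suc m = cmod (x - z1) * (cmod (lead_coeff q) * cmod (x - z1)^m)"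
        using lq by simp
      also have "... \<le> cmod (x - z1) * (cmod (lead_coeff q) * cmod (x - z2)^m)"
        using True by (intro mult_left_mono power_mono) auto
      also have "... \<le> cmod (poly p x)" using b2 npx by (simp add: mult_left_mono)
      finally show ?thesis using z1 by blast
    next
      case False
      have "cmod (lead_coeff p) * cmod (x - z2)^Suc m = cmod (x - z2) * (cmod (lead_coeff q) * cmod (x - z2)^m)"
        using lq by simp
      also have "... \<le> cmod (x - z1) * (cmod (lead_coeff q) * cmod (x - z2)^m)"
        using False by (intro mult_right_mono) auto
      also have "... \<le> cmod (poly p x)" using b2 npx by (simp add: mult_left_mono)
      finally show ?thesis using pz2 by blast
    qed
  qed
qed

definition Mco :: "int list list" where "Mco = [[0, 0, 0, 0, 0, 1, 2, 1], [0, 0, 0, 1, -2, -4, 3, 4], [0, 0, -2, 4, 6, -12, -6, 6], [1, 2, -4, -5, 19, 0, -16, 4], [0, 2, 3, -16, 6, 18, -12, 1], [0, -1, 7, -5, -12, 14, -3, 0], [0, -1, 1, 5, -8, 3, 0, 0], [0, 0, -1, 2, -1, 0, 0, 0]]"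
lemma poly2_P5: "poly2 P5"
  unfolding poly2_def
proof (intro exI allI)
  fix u v :: complex
  show "P5 u v = (\<Sum>i\<le>7. \<Sum>j\<le>7. of_int (Mco ! i ! j) * u^i * v^j)"
    by (simp add: eval_nat_numeral sum.atMost_Suc Mco_def P5_def)
qed

definition Pu :: "complex \<Rightarrow> complex poly" where
 "Pu u = [: u^3, (0 - u^6 - u^5 + 2 * u^4 + 2 * u^3), (0 - u^7 + u^6 + 7 * u^5 + 3 * u^4 - 4 * u^3 - 2 * u^2),
   (2 * u^7 + 5 * u^6 - 5 * u^5 - 16 * u^4 - 5 * u^3 + 4 * u^2 + u), (0 - u^7 - 8 * u^6 - 12 * u^5 + 6 * u^4 + 19 * u^3 + 6 * u^2 - 2 * u),
   (3 * u^6 + 14 * u^5 + 18 * u^4 - 12 * u^2 - 4 * u + 1), (0 - 3 * u^5 - 12 * u^4 - 16 * u^3 - 6 * u^2 + 3 * u + 2), (u+1)^4 :]"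

lemma poly_Pu: "poly (Pu u) v = P5 u v"
  unfolding Pu_def P5_def by simp algebra

lemma deg_Pu: "u \<noteq> -1 \<Longrightarrow> degree (Pu u) = 7 \<and> lead_coeff (Pu u) = (u+1)^4"
  using neg1[of u] by (simp add: Pu_def eval_nat_numeral)

lemma P5_m1: "P5 (-1) v = -1" unfolding P5_def by algebra
lemma P5_diag: "P5 u u = u^3 * (1+u+u^2+u^3+u^4)"
  unfolding P5_def by algebra

lemma finite_bad: "finite {u::complex. u * (u+1) * (1+u+u^2+u^3+u^4) = 0}"
proof -
  have "{u::complex. u * (u+1) * (1+u+u^2+u^3+u^4) = 0} = {u. poly ([:0,1:] * [:1,1:] * [:1,1,1,1,1:]) u = 0}"
    by (simp add: algebra_simps eval_nat_numeral)
  moreover have "[:0,1:] * [:1,1:] * [:1,1,1,1,1:] \<noteq> (0::complex poly)" by simp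
  ultimately show ?thesis using poly_roots_finite by metis
qed

lemma avoid: assumes "finite (B::complex set)" "0 < \<rho>" shows "\<exists>u. cmod (u - u0) < \<rho> \<and> u \<notin> B"
proof -
  let ?S = "(\<lambda>t. u0 + complex_of_real t) ` {0<..<\<rho>}"
  have "inj_on (\<lambda>t. u0 + complex_of_real t) {0<..<\<rho>}" by (auto simp: inj_on_def)
  hence "infinite ?S" using assms(2) by (simp add: finite_image_iff)
  hence "\<not> ?S \<subseteq> B" using assms(1) finite_subset by blast
  then obtain t where t: "t \<in> {0<..<\<rho>}" "u0 + complex_of_real t \<notin> B" by blast
  thus ?thesis by (intro exI[of _ "u0 + complex_of_real t"]) auto
qed

lemma density: assumes "P5 u0 v0 = 0" "0 < r"
  shows "\<exists>u v. exact_period 5 (u,v) \<and> cmod (u - u0) < r \<and> cmod (v - v0) < r"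
proof -
  have u0m: "u0 \<noteq> -1" using assms(1) P5_m1 by auto
  have u0n: "(u0+1)^4 \<noteq> 0" using neg1[OF u0m] by simp
  define h where "h u = P5 u v0 / (u+1)^4" for u
  have ch: "isCont h u0" unfolding h_def P5_def using u0n by (intro continuous_intros) auto
  have h0: "h u0 = 0" using assms(1) by (simp add: h_def)
  have rp: "0 < (r/2)^7" using assms(2) by simp
  obtain s where s: "s > 0" "\<And>x. x \<noteq> u0 \<and> norm (x - u0) < s \<Longrightarrow> norm (h x - 0) < (r/2)^7"
    using ch rp unfolding isCont_def LIM_eq h0 by blast
  have fin: "finite ({u::complex. u * (u+1) * (1+u+u^2+u^3+u^4) = 0} \<union> {u0})" using finite_bad by simp
  obtain u where u: "cmod (u - u0) < min s r" "u \<notin> {u::complex. u * (u+1) * (1+u+u^2+u^3+u^4) = 0} \<union> {u0}"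
    using avoid[OF fin, of "min s r" u0] s(1) assms(2) by auto
  have u0': "u \<noteq> 0" using u(2) by auto
  have um: "u \<noteq> -1" using u(2) by auto
  have q5: "1+u+u^2+u^3+u^4 \<noteq> 0" using u(2) by auto
  have hu: "cmod (h u) < (r/2)^7" using s(2)[of u] u by auto
  obtain v where v: "poly (Pu u) v = 0" "cmod (lead_coeff (Pu u)) * cmod (v0 - v)^7 \<le> cmod (poly (Pu u) v0)"
    using root_bound[of "Pu u" 7 v0] deg_Pu[OF um] by auto
  have Pv: "P5 u v = 0" using v(1) poly_Pu by simp
  have lc: "cmod ((u+1)^4) > 0" using neg1[OF um] by simp
  have "cmod ((u+1)^4) * cmod (v0 - v)^7 \<le> cmod (P5 u v0)" using v(2) unfolding deg_Pu[OF um, THEN conjunct2] poly_Pu .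
  hence "cmod (v0 - v)^7 \<le> cmod (h u)" using lc by (simp add: h_def norm_divide field_simps)
  hence "cmod (v0 - v)^7 < (r/2)^7" using hu by simp
  hence "cmod (v0 - v) < r/2" using power_less_imp_less_base[of "cmod (v0 - v)" 7 "r/2"] assms(2) by linarith
  moreover have "cmod (v - v0) = cmod (v0 - v)" by (rule norm_minus_commute)
  ultimately have vv: "cmod (v - v0) < r" using norm_ge_zero[of "v0 - v"] by linarith
  have vu: "v \<noteq> u"
  proof
    assume "v = u"
    hence "P5 u u = 0" using Pv by simp
    hence "u^3 * (1+u+u^2+u^3+u^4) = 0" using P5_diag[of u] by simp
    thus False using u0' q5 by simp
  qed
  have "exact_period 5 (u,v)" using GP[OF Pv u0' um vu] .
  thus ?thesis using u(1) vv by auto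
qed

lemma cont_poly2: assumes "poly2 f" shows "isCont (\<lambda>q. f (fst q) (snd q)) x"
proof -
  obtain n c where fc: "\<And>u v. f u v = (\<Sum>i\<le>n. \<Sum>j\<le>n. c i j * u^i * v^j)" using assms unfolding poly2_def by blast
  have "(\<lambda>q. f (fst q) (snd q)) = (\<lambda>q. \<Sum>i\<le>n. \<Sum>j\<le>n. c i j * fst q^i * snd q^j)" using fc by auto
  moreover have "isCont (\<lambda>q::complex\<times>complex. \<Sum>i\<le>n. \<Sum>j\<le>n. c i j * fst q^i * snd q^j) x"
    by (intro continuous_intros)
  ultimately show ?thesis by simp
qed

lemma vanish: assumes "poly2 f" "\<And>s. exact_period 5 s \<Longrightarrow> f (fst s) (snd s) = 0" "P5 u0 v0 = 0"
  shows "f u0 v0 = 0"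
proof (rule ccontr)
  assume ne: "f u0 v0 \<noteq> 0"
  obtain e where e: "e > 0" "\<And>y. dist (u0,v0) y < e \<Longrightarrow> f (fst y) (snd y) \<noteq> 0"
    using continuous_at_avoid[OF cont_poly2[OF assms(1), of "(u0,v0)"], of 0] ne by auto
  obtain u v where uv: "exact_period 5 (u,v)" "cmod (u - u0) < e/2" "cmod (v - v0) < e/2"
    using density[OF assms(3), of "e/2"] e(1) by auto
  have "dist (u0,v0) (u,v) < e" unfolding dist_Pair_Pair
    using uv by (intro sqrt_sum_squares_half_less) (auto simp: dist_norm norm_minus_commute)
  hence "f u v \<noteq> 0" using e(2) by fastforce
  thus False using assms(2)[OF uv(1)] by simp
qed

theorem mainTheorem7:
  shows "{p. exact_period 5 p} \<subseteq> {(u,v). P5 u v = 0} \<and>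
         zariski_closure {p. exact_period 5 p} = {(u,v). P5 u v = 0}"
proof -
  have sub: "{p. exact_period 5 p} \<subseteq> {(u,v). P5 u v = 0}"
  proof
    fix p assume "p \<in> {p. exact_period 5 p}"
    hence "P5 (fst p) (snd p) = 0" using P1 by simp
    thus "p \<in> {(u,v). P5 u v = 0}" by (cases p) simp
  qed
  have zc: "zariski_closed {(u,v). P5 u v = 0}" unfolding zariski_closed_def
  proof (intro exI[of _ "{P5}"] conjI)
    show "\<forall>f\<in>{P5}. poly2 f" using poly2_P5 by simp
    show "{(u,v). P5 u v = 0} = {(u,v). \<forall>f\<in>{P5}. f u v = 0}" by simp
  qed
  have le: "zariski_closure {p. exact_period 5 p} \<subseteq> {(u,v). P5 u v = 0}"
    unfolding zariski_closure_def by (rule Inter_lower) (simp add: zc sub)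
  have ge: "{(u,v). P5 u v = 0} \<subseteq> A" if A: "A \<in> {A. zariski_closed A \<and> {p. exact_period 5 p} \<subseteq> A}" for A
  proof
    fix q assume q: "q \<in> {(u,v). P5 u v = 0}"
    have zA: "zariski_closed A" and SA: "{p. exact_period 5 p} \<subseteq> A" using A by simp_all
    obtain F where F: "\<forall>f\<in>F. poly2 f" "A = {(u,v). \<forall>f\<in>F. f u v = 0}"
      using zA unfolding zariski_closed_def by blast
    have "f (fst q) (snd q) = 0" if fF: "f \<in> F" for f
    proof (rule vanish[of f])
      show "poly2 f" using F(1) fF by blast
      show "f (fst s) (snd s) = 0" if es: "exact_period 5 s" for s
      proof -
        have "s \<in> A" using SA es by blast
        hence "s \<in> {(u,v). \<forall>f\<in>F. f u v = 0}" using F(2) by simp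
        thus ?thesis using fF by (cases s) simp
      qed
      show "P5 (fst q) (snd q) = 0" using q by (cases q) simp
    qed
    hence "q \<in> {(u,v). \<forall>f\<in>F. f u v = 0}" by (cases q) simp
    thus "q \<in> A" using F(2) by simp
  qed
  have "{(u,v). P5 u v = 0} \<subseteq> zariski_closure {p. exact_period 5 p}"
    unfolding zariski_closure_def by (rule Inter_greatest) (rule ge)
  with le sub show ?thesis by blast
qed

end
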